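(* Let $W$ be a finite Coxeter group of rank $r$ with realization $\mathbb V$, $\mathbb V^W=0$, and let $\mathsf{tr}=\sum_{\phi\in\hat W}\mathsf{tr}_\phi\,\phi_{\boldsymbol q}$ be Gomi's trace. Then for all $\beta\in\mathit{Br}_W$, $$\mathsf{tr}(\beta)=(-\boldsymbol q^{-\frac12})^{|\beta|}\left(\frac{1-\boldsymbol q}{1-a^2}\right)^r\sum_i(-a^2)^i\,(\mathrm{Alt}^i(\mathbb V),\mathrm{Tr}^0\{\beta\})_W.$$
   Context: $(W,S)$ a finite Coxeter system, $\mathit{Br}_W$ its Artin braid group, writhe $|\sigma_s|=1$; $H_W=\mathbb Z[\boldsymbol q^{\pm1/2}][\mathit{Br}_W^+]/((\sigma_s-\boldsymbol q^{1/2})(\sigma_s+\boldsymbol q^{-1/2}))$; $\phi_{\boldsymbol q}$ the character of $H_W$ corresponding to $\phi\in\hat W$ by Tits deformation; $\{-,-\}$ Lusztig's exotic Fourier pairing on $\hat W$; $(-,-)_W$ the standard multiplicity pairing on $R(W)$, extended linearly; $\varepsilon$ the sign character; $[\mathrm{Sym}\mathbb V]_{\boldsymbol q}=\sum_i\boldsymbol q^i\mathrm{Sym}^i\mathbb V$; $\mathrm{Tr}\{\beta\}=\sum_{\phi,\psi}\{\phi,\psi\}\phi_{\boldsymbol q}(\beta)\psi$ and $\mathrm{Tr}^0\{\beta\}=(-\boldsymbol q^{1/2})^{|\beta|}\mathrm{Tr}\{\beta\}\varepsilon[\mathrm{Sym}\mathbb V]_{\boldsymbol q}$. Gomi's weights: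 $\boldsymbol m_\psi(\boldsymbol q,x)=\sum_{i,j}(-x)^i\boldsymbol q^j(\psi,\mathrm{Alt}^i(\mathbb V)\otimes\mathrm{Sym}^j(\mathbb V))_W$ and $\mathsf{tr}_\phi=\left(\frac{1-\boldsymbol q}{1-a^{-2}}\right)^r\sum_{\psi}\{\phi,\psi\}\boldsymbol m_\psi(\boldsymbol q,a^{-2})$, with $a$ a further indeterminate. *)

theory Defs
  imports "HOL-Analysis.Analysis"
begin

type_synonym 'n mtx = "real^'n^'n"

text \<open>Orthogonal reflection of the realization V = real^'n (standard inner product).\<close>
definition reflection :: "'n::finite mtx \<Rightarrow> bool" where
  "reflection s \<longleftrightarrow> (\<exists>v::real^'n. v \<noteq> 0 \<and>
      s = mat 1 - (2 / (v \<bullet> v)) *\<^sub>R (\<chi> i j. v $ i * v $ j))"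

text \<open>The group W generated by a set S of reflections (finite case: closure under products).\<close>
inductive_set gen_group :: "'n::finite mtx set \<Rightarrow> 'n mtx set" for S where
  one: "mat 1 \<in> gen_group S"
| step: "g \<in> gen_group S \<Longrightarrow> s \<in> S \<Longrightarrow> s ** g \<in> gen_group S"

definition class_pairing :: "'n::finite mtx set \<Rightarrow> ('n mtx \<Rightarrow> real) \<Rightarrow> ('n mtx \<Rightarrow> real) \<Rightarrow> real" where
  "class_pairing W f g = (\<Sum>w\<in>W. f w * g w) / real (card W)"

text \<open>Irr is the set of irreducible characters of W: an orthonormal basis of class functions.\<close>
definition irr_chars :: "'n::finite mtx set \<Rightarrow> ('n mtx \<Rightarrow> real) set \<Rightarrow> bool" where
  "irr_chars W Irr \<longleftrightarrow> finite Irr \<and>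
     (\<forall>c0\<in>Irr. \<forall>g\<in>W. \<forall>w\<in>W. c0 (g ** w ** matrix_inv g) = c0 w) \<and>
     (\<forall>c0\<in>Irr. c0 (mat 1) > 0) \<and>
     (\<forall>c0\<in>Irr. \<forall>\<psi>\<in>Irr. class_pairing W c0 \<psi> = (if c0 = \<psi> then 1 else 0)) \<and>
     (\<forall>f. (\<forall>g\<in>W. \<forall>w\<in>W. f (g ** w ** matrix_inv g) = f w) \<longrightarrow>
          (\<exists>c. \<forall>w\<in>W. f w = (\<Sum>c0\<in>Irr. c c0 * c0 w)))"

text \<open>Character of Alt^i(V): sum of the principal i x i minors.\<close>
definition alt_char :: "nat \<Rightarrow> 'n::finite mtx \<Rightarrow> real" where
  "alt_char i w = (\<Sum>K\<in>{K. card K = i}.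
      det (\<chi> a b. if a \<in> K \<and> b \<in> K then w $ a $ b else if a = b then 1 else 0))"

text \<open>Graded character of Sym(V), [Sym V]_q evaluated at a number 0 < q < 1:
  sum_j q^j tr(w | Sym^j V) = 1 / det(1 - q w).\<close>
definition sym_char_q :: "real \<Rightarrow> 'n::finite mtx \<Rightarrow> real" where
  "sym_char_q q w = 1 / det (mat 1 - q *\<^sub>R w)"

text \<open>Elements of Br_W as words in the generators sigma_s^{+-1} (True = positive).\<close>
type_synonym 'n braid_word = "('n mtx \<times> bool) list"

definition writhe :: "'n braid_word \<Rightarrow> int" where
  "writhe \<beta> = (\<Sum>x\<leftarrow>\<beta>. if snd x then 1 else -1)"

text \<open>Tr^0{beta} as a class function on W (with q specialised).\<close>
definition Tr0 :: "('n::finite mtx \<Rightarrow> real) set \<Rightarrow> (('n mtx \<Rightarrow> real) \<Rightarrow> ('n mtx \<Rightarrow> real) \<Rightarrow> real)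
     \<Rightarrow> (('n mtx \<Rightarrow> real) \<Rightarrow> 'n braid_word \<Rightarrow> real) \<Rightarrow> real \<Rightarrow> 'n braid_word \<Rightarrow> 'n mtx \<Rightarrow> real" where
  "Tr0 Irr fp hc q \<beta> w = (- sqrt q) powi writhe \<beta> *
      (\<Sum>\<phi>\<in>Irr. \<Sum>\<psi>\<in>Irr. fp \<phi> \<psi> * hc \<phi> \<beta> * \<psi> w) * det w * sym_char_q q w"

definition gomi_m :: "'n::finite mtx set \<Rightarrow> ('n mtx \<Rightarrow> real) \<Rightarrow> real \<Rightarrow> real \<Rightarrow> real" where
  "gomi_m W \<psi> q x = (\<Sum>i\<le>CARD('n). (- x) ^ i *
      class_pairing W \<psi> (\<lambda>w. alt_char i w * sym_char_q q w))"

definition gomi_tr_phi :: "'n::finite mtx set \<Rightarrow> ('n mtx \<Rightarrow> real) set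
     \<Rightarrow> (('n mtx \<Rightarrow> real) \<Rightarrow> ('n mtx \<Rightarrow> real) \<Rightarrow> real) \<Rightarrow> real \<Rightarrow> real \<Rightarrow> ('n mtx \<Rightarrow> real) \<Rightarrow> real" where
  "gomi_tr_phi W Irr fp q a \<phi> = ((1 - q) / (1 - a powi (-2))) ^ CARD('n) *
      (\<Sum>\<psi>\<in>Irr. fp \<phi> \<psi> * gomi_m W \<psi> q (a powi (-2)))"

definition gomi_trace :: "'n::finite mtx set \<Rightarrow> ('n mtx \<Rightarrow> real) set
     \<Rightarrow> (('n mtx \<Rightarrow> real) \<Rightarrow> ('n mtx \<Rightarrow> real) \<Rightarrow> real)
     \<Rightarrow> (('n mtx \<Rightarrow> real) \<Rightarrow> 'n braid_word \<Rightarrow> real) \<Rightarrow> real \<Rightarrow> real \<Rightarrow> 'n braid_word \<Rightarrow> real" where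
  "gomi_trace W Irr fp hc q a \<beta> = (\<Sum>\<phi>\<in>Irr. gomi_tr_phi W Irr fp q a \<phi> * hc \<phi> \<beta>)"

end

theory Submission
  imports Defs
begin


lemma det_unit_cols:
  fixes A :: "real^'n::finite^'n"
  assumes "\<And>i j. j \<notin> L \<Longrightarrow> A$i$j = (if i = j then 1 else 0)"
  shows "det A = det (\<chi> a b. if a \<in> L \<and> b \<in> L then A$a$b else if a = b then 1 else 0)"
  unfolding det_def
proof (rule sum.cong[OF refl])
  fix p assume p: "p \<in> {p. p permutes (UNIV::'n set)}"
  hence pp: "p permutes UNIV" by simp
  let ?C = "(\<chi> a b. if a \<in> L \<and> b \<in> L then A$a$b else if a = b then 1 else 0) :: real^'n^'n"
  show "of_int (sign p) * (\<Prod>i\<in>UNIV. A $ i $ p i) = of_int (sign p) * (\<Prod>i\<in>UNIV. ?C $ i $ p i)"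
  proof (cases "\<forall>j. j \<notin> L \<longrightarrow> p j = j")
    case True
    have "A $ i $ p i = ?C $ i $ p i" for i
    proof (cases "i \<in> L")
      case True
      have "p i \<in> L"
      proof (rule ccontr)
        assume "p i \<notin> L"
        hence "p (p i) = p i" using \<open>\<forall>j. j \<notin> L \<longrightarrow> p j = j\<close> by blast
        hence "p i = i" using permutes_inj[OF pp] by (meson injD)
        thus False using \<open>p i \<notin> L\<close> True by simp
      qed
      thus ?thesis using True by simp
    next
      case False
      have "p i = i" using \<open>\<forall>j. j \<notin> L \<longrightarrow> p j = j\<close> False by blast
      moreover have "A $ i $ i = 1" using assms[of i i] False by presburger
      ultimately show ?thesis using False by simp
    qed
    thus ?thesis by simp
  next
    case False
    then obtain j where j: "j \<notin> L" "p j \<noteq> j" by blast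
    define i where "i = inv p j"
    have pi: "p i = j" unfolding i_def using permutes_inverses(1)[OF pp] by simp
    have ij: "i \<noteq> j"
    proof
      assume "i = j"
      hence "p j = j" using pi by simp
      thus False using j(2) by contradiction
    qed
    have "A $ i $ j = 0" using assms[of j i] ij j(1) by presburger
    hence z1: "A $ i $ p i = 0" using pi by simp
    have z2: "?C $ i $ p i = 0" using pi ij j by simp
    have e1: "(\<Prod>i\<in>UNIV. A $ i $ p i) = 0"
      by (rule prod_zero[OF finite]) (use z1 in blast)
    have e2: "(\<Prod>i\<in>UNIV. ?C $ i $ p i) = 0"
      by (rule prod_zero[OF finite]) (use z2 in blast)
    show ?thesis by (simp only: e1 e2)
  qed
qed

lemma reflection_orth:
  fixes s :: "'n::finite mtx"
  assumes "reflection s" shows "orthogonal_matrix s"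
proof -
  obtain v :: "real^'n" where v: "v \<noteq> 0" and s: "s = mat 1 - (2 / (v \<bullet> v)) *\<^sub>R (\<chi> i j. v $ i * v $ j)"
    using assms unfolding reflection_def by blast
  define c where "c = 2 / (v \<bullet> v)"
  have vv: "v \<bullet> v \<noteq> 0" using v by simp
  have vs: "v \<bullet> v = (\<Sum>k\<in>UNIV. v$k * v$k)" by (simp add: inner_vec_def)
  have cc: "c * c * (v \<bullet> v) = 2 * c" unfolding c_def using vv by (simp add: field_simps)
  have st: "transpose s = s" unfolding s by (simp add: vec_eq_iff transpose_def mat_def mult.commute)
  have "s ** s = mat 1"
  proof -
    have "(s ** s) $ i $ j = mat 1 $ i $ j" for i j
    proof -
      have se: "s $ x $ y = (if x = y then 1 else 0) - c * (v$x * v$y)" for x y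
        unfolding s c_def by (simp add: mat_def)
      have "(s ** s) $ i $ j = (\<Sum>k\<in>UNIV. s$i$k * s$k$j)"
        by (simp add: matrix_matrix_mult_def)
      also have "\<dots> = (\<Sum>k\<in>UNIV. (if i = k then (if k = j then 1 else 0) else 0)
          - (if i = k then c * (v$k * v$j) else 0) - (if j = k then c * (v$i * v$k) else 0)
          + (c * c * v$i * v$j) * (v$k * v$k))"
        unfolding se by (rule sum.cong) (auto simp: algebra_simps)
      also have "\<dots> = (if i = j then 1 else 0) - c * (v$i * v$j) - c * (v$i * v$j) + (c * c * v$i * v$j) * (\<Sum>k\<in>UNIV. v$k * v$k)"
        by (simp only: sum.distrib sum_subtractf sum_distrib_left[symmetric]) (simp add: sum.delta sum.delta')
      also have "\<dots> = (if i = j then 1 else 0) - 2 * c * v$i * v$j + c * c * v$i * v$j * (v \<bullet> v)"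
        by (simp add: vs)
      also have "\<dots> = mat 1 $ i $ j"
      proof -
        have "c * c * v$i * v$j * (v \<bullet> v) = (c * c * (v \<bullet> v)) * v$i * v$j" by (simp add: algebra_simps)
        also have "\<dots> = 2 * c * v$i * v$j" by (simp add: cc)
        finally show ?thesis by (simp add: mat_def)
      qed
      finally show ?thesis .
    qed
    thus ?thesis by (simp add: vec_eq_iff)
  qed
  thus ?thesis unfolding orthogonal_matrix st .
qed


lemma gen_group_orth:
  assumes "\<forall>s\<in>S. reflection s" and "w \<in> gen_group S"
  shows "orthogonal_matrix w"
  using assms(2)
proof induction
  case one then show ?case by (rule orthogonal_matrix_id)
next
  case (step g s) then show ?case
    using assms(1) reflection_orth orthogonal_matrix_mul by blast
qed

lemma card_compl': "card (- (A::'n::finite set)) = CARD('n) - card A"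
  by (metis Compl_eq_Diff_UNIV card_Diff_subset top_greatest finite)

definition pminor :: "'n::finite set \<Rightarrow> real^'n^'n \<Rightarrow> real^'n^'n" where
  "pminor K w = (\<chi> a b. if a \<in> K \<and> b \<in> K then w $ a $ b else if a = b then 1 else 0)"

lemma minor_compl:
  fixes w :: "real^'n::finite^'n"
  assumes orth: "orthogonal_matrix w"
  shows "det (pminor (- K) w) = det w * det (pminor K w)"
proof -
  define L where "L = - K"
  define B :: "real^'n^'n" where "B = (\<chi> i j. if j \<in> L then w$i$j else if i = j then 1 else 0)"
  have dB: "det B = det (pminor L w)"
  proof -
    have "det B = det (pminor L B)" unfolding pminor_def
      by (rule det_unit_cols) (simp add: B_def)
    also have "pminor L B = pminor L w" by (simp add: pminor_def B_def vec_eq_iff)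
    finally show ?thesis .
  qed
  define M where "M = transpose w ** B"
  have tw: "transpose w ** w = mat 1" using orth unfolding orthogonal_matrix by simp
  have Mcol: "M $ i $ j = (if i = j then 1 else 0)" if "j \<notin> K" for i j
  proof -
    have "M $ i $ j = (\<Sum>k\<in>UNIV. w$k$i * w$k$j)"
      using that by (simp add: M_def B_def L_def matrix_matrix_mult_def transpose_def)
    also have "\<dots> = (transpose w ** w) $ i $ j"
      by (simp add: matrix_matrix_mult_def transpose_def)
    finally show ?thesis using tw by (simp add: mat_def)
  qed
  have dM: "det M = det (pminor K w)"
  proof -
    have "det M = det (pminor K M)" unfolding pminor_def
      by (rule det_unit_cols) (rule Mcol)
    also have "pminor K M = transpose (pminor K w)"
    proof -
      have "M $ a $ b = w $ b $ a" if "b \<in> K" for a b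
      proof -
        have "M $ a $ b = (\<Sum>k\<in>UNIV. w$k$a * (if k = b then 1 else 0))"
          using that by (simp add: M_def B_def L_def matrix_matrix_mult_def transpose_def)
        also have "\<dots> = w $ b $ a"
          by (simp add: if_distrib[of "\<lambda>x. _ * x"] sum.delta cong: if_cong)
        finally show ?thesis .
      qed
      thus ?thesis by (auto simp: pminor_def vec_eq_iff transpose_def)
    qed
    finally show ?thesis by simp
  qed
  have "det M = det w * det B" by (simp add: M_def det_mul)
  hence e: "det w * det (pminor L w) = det (pminor K w)" using dB dM by simp
  have "det w = 1 \<or> det w = -1" using det_orthogonal_matrix[OF orth] .
  hence "det w * det w = 1" by auto
  hence "det (pminor L w) = (det w * det w) * det (pminor L w)" by simp
  also have "\<dots> = det w * (det w * det (pminor L w))" by (simp only: mult.assoc)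
  also have "\<dots> = det w * det (pminor K w)" by (simp only: e)
  finally show ?thesis by (simp only: L_def)
qed

lemma alt_char_compl:
  fixes w :: "real^'n::finite^'n"
  assumes orth: "orthogonal_matrix w" and i: "i \<le> CARD('n)"
  shows "alt_char (CARD('n) - i) w = det w * alt_char i w"
proof -
  have "alt_char (CARD('n) - i) w = (\<Sum>K\<in>{K. card K = CARD('n) - i}. det (pminor K w))"
    by (simp add: alt_char_def pminor_def)
  also have "\<dots> = (\<Sum>K\<in>{K::'n set. card K = i}. det (pminor (- K) w))"
  proof (rule sum.reindex_bij_witness[where i = uminus and j = uminus])
    fix K :: "'n set" assume "K \<in> {K. card K = i}"
    thus "- K \<in> {K. card K = CARD('n) - i}" by (simp add: card_compl')
  next
    fix K :: "'n set" assume "K \<in> {K. card K = CARD('n) - i}"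
    hence "card K = CARD('n) - i" by simp
    moreover have "card K \<le> CARD('n)" by (rule card_mono) auto
    ultimately show "- K \<in> {K. card K = i}" using i by (simp add: card_compl')
  qed auto
  also have "\<dots> = (\<Sum>K\<in>{K::'n set. card K = i}. det w * det (pminor K w))"
    by (rule sum.cong) (simp_all add: minor_compl[OF orth])
  also have "\<dots> = det w * alt_char i w"
    by (simp add: alt_char_def pminor_def sum_distrib_left)
  finally show ?thesis .
qed



lemma scalar_id:
  fixes q a :: real
  assumes a: "a \<noteq> 0" "a^2 \<noteq> 1" and j: "j \<le> r"
  shows "((1 - q) / (1 - a^2)) ^ r * (- (a^2)) ^ (r - j)
       = ((1 - q) / (1 - a powi (-2))) ^ r * (- (a powi (-2))) ^ j"
proof -
  define A where "A = (1 - q) / (1 - a^2)"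
  have ap: "a powi (-2) = 1 / a^2" by (simp add: power_int_minus power_int_def divide_inverse power_inverse)
  have a2: "a^2 \<noteq> 0" using a by simp
  have "1 - a^2 \<noteq> 0" using a by simp
  hence B: "(1 - q) / (1 - a powi (-2)) = - (a^2) * A"
    unfolding ap A_def using a2 by (simp add: field_simps)
  obtain m where m: "r = j + m" using j le_Suc_ex by blast
  have e1: "(- (a^2) * A) ^ r = (- (a^2))^j * (- (a^2))^m * A^r"
    unfolding m by (simp only: power_mult_distrib power_add mult_ac)
  have "(- (a^2))^j * (- (1/a^2))^j = ((- (a^2)) * (- (1/a^2)))^j"
    by (rule power_mult_distrib[symmetric])
  also have "\<dots> = 1" using a2 by simp
  finally have e2: "(- (a^2))^j * (- (1/a^2))^j = 1" .
  have "(- (a^2) * A) ^ r * (- (1 / a^2)) ^ j = ((- (a^2))^j * (- (1/a^2))^j) * (A^r * (- (a^2))^m)"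
    unfolding e1 by (simp only: mult_ac)
  also have "\<dots> = A ^ r * (- (a^2)) ^ m" by (simp only: e2 mult_1_left)
  finally have "(- (a^2) * A) ^ r * (- (1 / a^2)) ^ j = A ^ r * (- (a^2)) ^ m" .
  moreover have "r - j = m" using m by simp
  ultimately have X: "(- (a^2) * A) ^ r * (- (1 / a^2)) ^ j = A ^ r * (- (a^2)) ^ (r - j)" by simp
  have "((1 - q) / (1 - a powi (-2))) ^ r * (- (a powi (-2))) ^ j = A ^ r * (- (a^2)) ^ (r - j)"
    by (subst B) (simp only: ap X)
  then show ?thesis unfolding A_def by (rule sym)
qed

theorem proposition7p5:
  fixes S :: "'n::finite mtx set"
    and Irr :: "('n mtx \<Rightarrow> real) set"
    and fp :: "('n mtx \<Rightarrow> real) \<Rightarrow> ('n mtx \<Rightarrow> real) \<Rightarrow> real"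
    and hc :: "('n mtx \<Rightarrow> real) \<Rightarrow> 'n braid_word \<Rightarrow> real"
    and \<beta> :: "'n braid_word"
    and q a :: real
  assumes "finite S" and "\<forall>s\<in>S. reflection s"
    and "finite (gen_group S)"
    and "\<forall>v::real^'n. (\<forall>w\<in>gen_group S. w *v v = v) \<longrightarrow> v = 0"
    and "irr_chars (gen_group S) Irr"
    and "\<forall>x\<in>set \<beta>. fst x \<in> S"
    and "0 < q" and "q < 1" and "a \<noteq> 0" and "a^2 \<noteq> 1"
  shows "gomi_trace (gen_group S) Irr fp hc q a \<beta> =
    (- 1 / sqrt q) powi writhe \<beta> * ((1 - q) / (1 - a^2)) ^ CARD('n) *
    (\<Sum>i\<le>CARD('n). (- (a^2)) ^ i *
        class_pairing (gen_group S) (alt_char i) (Tr0 Irr fp hc q \<beta>))"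
proof -
  define W where "W = gen_group S"
  define r where "r = CARD('n)"
  define sy :: "'n mtx \<Rightarrow> real" where "sy = sym_char_q q"
  define G where "G = (\<lambda>\<psi> j. class_pairing W \<psi> (\<lambda>w. alt_char j w * sy w))"
  define c where "c = (- sqrt q) powi writhe \<beta>"
  define A where "A = (1 - q) / (1 - a^2)"
  define B where "B = (1 - q) / (1 - a powi (-2))"
  define N where "N = real (card W)"
  have orth: "\<And>w. w \<in> W \<Longrightarrow> orthogonal_matrix w"
    unfolding W_def using gen_group_orth assms(2) by blast
  have cc: "(- 1 / sqrt q) powi writhe \<beta> * c = 1"
  proof -
    have "(- 1 / sqrt q) * (- sqrt q) = 1" using assms(7) by simp
    hence "((- 1 / sqrt q) * (- sqrt q)) powi writhe \<beta> = 1" by simp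
    thus ?thesis unfolding c_def by (simp only: power_int_mult_distrib)
  qed
  have key: "class_pairing W (alt_char i) (Tr0 Irr fp hc q \<beta>)
      = c * (\<Sum>\<phi>\<in>Irr. \<Sum>\<psi>\<in>Irr. fp \<phi> \<psi> * hc \<phi> \<beta> * G \<psi> (r - i))" if i: "i \<le> r" for i
  proof -
    have pw: "alt_char i w * Tr0 Irr fp hc q \<beta> w =
       (\<Sum>\<phi>\<in>Irr. \<Sum>\<psi>\<in>Irr. c * (fp \<phi> \<psi> * hc \<phi> \<beta>) * (\<psi> w * (alt_char (r - i) w * sy w)))"
      if w: "w \<in> W" for w
    proof -
      have "alt_char (r - i) w = det w * alt_char i w"
        using alt_char_compl[OF orth[OF w]] i unfolding r_def by blast
      hence "alt_char i w * Tr0 Irr fp hc q \<beta> w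
          = c * (alt_char (r - i) w * sy w) * (\<Sum>\<phi>\<in>Irr. \<Sum>\<psi>\<in>Irr. fp \<phi> \<psi> * hc \<phi> \<beta> * \<psi> w)"
        by (simp add: Tr0_def c_def sy_def algebra_simps)
      also have "\<dots> = (\<Sum>\<phi>\<in>Irr. \<Sum>\<psi>\<in>Irr. c * (fp \<phi> \<psi> * hc \<phi> \<beta>) * (\<psi> w * (alt_char (r - i) w * sy w)))"
        by (simp add: sum_distrib_left mult_ac)
      finally show ?thesis .
    qed
    have "class_pairing W (alt_char i) (Tr0 Irr fp hc q \<beta>)
       = (\<Sum>w\<in>W. \<Sum>\<phi>\<in>Irr. \<Sum>\<psi>\<in>Irr. c * (fp \<phi> \<psi> * hc \<phi> \<beta>) * (\<psi> w * (alt_char (r - i) w * sy w))) / N"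
      unfolding class_pairing_def N_def using pw by simp
    also have "(\<Sum>w\<in>W. \<Sum>\<phi>\<in>Irr. \<Sum>\<psi>\<in>Irr. c * (fp \<phi> \<psi> * hc \<phi> \<beta>) * (\<psi> w * (alt_char (r - i) w * sy w)))
       = (\<Sum>\<phi>\<in>Irr. \<Sum>\<psi>\<in>Irr. \<Sum>w\<in>W. c * (fp \<phi> \<psi> * hc \<phi> \<beta>) * (\<psi> w * (alt_char (r - i) w * sy w)))"
      by (rule trans[OF sum.swap], rule sum.cong[OF refl], rule sum.swap)
    also have "\<dots> / N = c * (\<Sum>\<phi>\<in>Irr. \<Sum>\<psi>\<in>Irr. fp \<phi> \<psi> * hc \<phi> \<beta> * G \<psi> (r - i))"
      by (simp add: G_def class_pairing_def N_def W_def sum_distrib_left sum_divide_distrib mult_ac)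
    finally show ?thesis .
  qed
  have gm: "gomi_m W \<psi> q (a powi (-2)) = (\<Sum>j\<le>r. (- (a powi (-2))) ^ j * G \<psi> j)" for \<psi>
    by (simp add: gomi_m_def G_def sy_def r_def)
  have "gomi_trace W Irr fp hc q a \<beta>
      = (\<Sum>\<phi>\<in>Irr. \<Sum>\<psi>\<in>Irr. \<Sum>j\<le>r. fp \<phi> \<psi> * hc \<phi> \<beta> * (B ^ r * (- (a powi (-2))) ^ j * G \<psi> j))"
    unfolding gomi_trace_def gomi_tr_phi_def gm
    by (simp add: B_def r_def sum_distrib_left sum_distrib_right mult_ac)
  also have "\<dots> = (\<Sum>\<phi>\<in>Irr. \<Sum>\<psi>\<in>Irr. \<Sum>j\<le>r. fp \<phi> \<psi> * hc \<phi> \<beta> * (A ^ r * (- (a^2)) ^ (r - j) * G \<psi> j))"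
    using scalar_id[OF assms(9,10)] unfolding A_def B_def by simp
  also have "\<dots> = A ^ r * (\<Sum>j\<le>r. (- (a^2)) ^ (r - j) * (\<Sum>\<phi>\<in>Irr. \<Sum>\<psi>\<in>Irr. fp \<phi> \<psi> * hc \<phi> \<beta> * G \<psi> j))"
  proof -
    have "A ^ r * (\<Sum>j\<le>r. (- (a^2)) ^ (r - j) * (\<Sum>\<phi>\<in>Irr. \<Sum>\<psi>\<in>Irr. fp \<phi> \<psi> * hc \<phi> \<beta> * G \<psi> j))
       = (\<Sum>j\<le>r. \<Sum>\<phi>\<in>Irr. \<Sum>\<psi>\<in>Irr. A ^ r * (- (a^2)) ^ (r - j) * (fp \<phi> \<psi> * hc \<phi> \<beta> * G \<psi> j))"
      by (simp add: sum_distrib_left mult.assoc)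
    also have "\<dots> = (\<Sum>\<phi>\<in>Irr. \<Sum>j\<le>r. \<Sum>\<psi>\<in>Irr. A ^ r * (- (a^2)) ^ (r - j) * (fp \<phi> \<psi> * hc \<phi> \<beta> * G \<psi> j))"
      by (rule sum.swap)
    also have "\<dots> = (\<Sum>\<phi>\<in>Irr. \<Sum>\<psi>\<in>Irr. \<Sum>j\<le>r. A ^ r * (- (a^2)) ^ (r - j) * (fp \<phi> \<psi> * hc \<phi> \<beta> * G \<psi> j))"
      by (rule sum.cong[OF refl], rule sum.swap)
    also have "\<dots> = (\<Sum>\<phi>\<in>Irr. \<Sum>\<psi>\<in>Irr. \<Sum>j\<le>r. fp \<phi> \<psi> * hc \<phi> \<beta> * (A ^ r * (- (a^2)) ^ (r - j) * G \<psi> j))"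
      by (simp only: mult_ac)
    finally show ?thesis by (rule sym)
  qed
  also have "(\<Sum>j\<le>r. (- (a^2)) ^ (r - j) * (\<Sum>\<phi>\<in>Irr. \<Sum>\<psi>\<in>Irr. fp \<phi> \<psi> * hc \<phi> \<beta> * G \<psi> j))
      = (\<Sum>i\<le>r. (- (a^2)) ^ i * (\<Sum>\<phi>\<in>Irr. \<Sum>\<psi>\<in>Irr. fp \<phi> \<psi> * hc \<phi> \<beta> * G \<psi> (r - i)))"
  proof -
    have "(\<Sum>i\<le>r. (- (a^2)) ^ i * (\<Sum>\<phi>\<in>Irr. \<Sum>\<psi>\<in>Irr. fp \<phi> \<psi> * hc \<phi> \<beta> * G \<psi> (r - i)))
      = (\<Sum>i\<in>{0..r}. (- (a^2)) ^ i * (\<Sum>\<phi>\<in>Irr. \<Sum>\<psi>\<in>Irr. fp \<phi> \<psi> * hc \<phi> \<beta> * G \<psi> (r - i)))"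
      by (simp add: atLeast0AtMost)
    also have "\<dots> = (\<Sum>j\<in>{0..r}. (- (a^2)) ^ (r + 0 - j) * (\<Sum>\<phi>\<in>Irr. \<Sum>\<psi>\<in>Irr. fp \<phi> \<psi> * hc \<phi> \<beta> * G \<psi> (r - (r + 0 - j))))"
      by (rule sum.atLeastAtMost_rev)
    also have "\<dots> = (\<Sum>j\<in>{0..r}. (- (a^2)) ^ (r - j) * (\<Sum>\<phi>\<in>Irr. \<Sum>\<psi>\<in>Irr. fp \<phi> \<psi> * hc \<phi> \<beta> * G \<psi> j))"
      by (rule sum.cong) auto
    finally show ?thesis by (simp add: atLeast0AtMost)
  qed
  also have "A ^ r * \<dots> = (- 1 / sqrt q) powi writhe \<beta> * A ^ r *
      (\<Sum>i\<le>r. (- (a^2)) ^ i * class_pairing W (alt_char i) (Tr0 Irr fp hc q \<beta>))"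
  proof -
    have "(\<Sum>i\<le>r. (- (a^2)) ^ i * class_pairing W (alt_char i) (Tr0 Irr fp hc q \<beta>))
       = c * (\<Sum>i\<le>r. (- (a^2)) ^ i * (\<Sum>\<phi>\<in>Irr. \<Sum>\<psi>\<in>Irr. fp \<phi> \<psi> * hc \<phi> \<beta> * G \<psi> (r - i)))"
      by (simp add: key sum_distrib_left mult_ac)
    thus ?thesis using cc by (simp add: mult_ac)
  qed
  finally show ?thesis unfolding W_def A_def r_def .
qed

end
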